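(* There exists a deterministic algorithm that finds the sink of any $n$-dimensional realizable Matoušek-type USO using $O(\log^2 n)$ vertex evaluations in the worst case.
   Context: All vectors and matrices are over $GF(2)$; $\oplus$ denotes xor. The $n$-dimensional hypercube has vertex set $\{0,1\}^n$, with vertices adjacent iff they differ in exactly one coordinate. An orientation is given by an outmap $o:\{0,1\}^n\to\{0,1\}^n$, the edge $\{v,v\oplus e_i\}$ being directed away from $v$ iff $o(v)_i=1$ (with $o(v)_i\neq o(v\oplus e_i)_i$). A USO is an orientation in which every non-empty face has a unique sink. An $n$-dimensional Matoušek-type USO is an orientation $o(v)=M(v\oplus s)$ where $M=PAP^T$ for a permutation matrix $P$ and an invertible upper-triangular $A\in\{0,1\}^{n\times n}$, and $s\in\{0,1\}^n$ is its sink. Its dimension influence graph is the directed graph on $[n]$ with an edge $(i,j)$ iff $M_{j,i}=1$. A USO is realizable if it is produced by the (Stickney–Watson) reduction from some non-degenerate P-matrix Linear Complementarity Problem instance to USO sink-finding; for Matoušek-type USOs it is known that this holds iff the dimension influence graph is the reflexive transitive closure of a branching (a forest of rooted trees with all edges directed away from the roots). A sink-finding algorithm accesses the USO only via vertex evaluations: querying $v$ returns $o(v)$. *)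

theory Defs
  imports "Jordan_Normal_Form.Determinant" "Jordan_Normal_Form.DL_Submatrix"
begin

text \<open>Vertices of the n-cube are subsets of the index set {0..<n};
  xor of vertices is symmetric difference. An outmap is a function on vertices.\<close>

definition vxor :: "nat set \<Rightarrow> nat set \<Rightarrow> nat set" where
  "vxor u v = (u - v) \<union> (v - u)"

text \<open>GF(2) matrices as boolean functions (row, column); products over GF(2).\<close>

definition gf2_matvec :: "nat \<Rightarrow> (nat \<Rightarrow> nat \<Rightarrow> bool) \<Rightarrow> nat set \<Rightarrow> nat set" where
  "gf2_matvec n M v = {j. j < n \<and> odd (card {i. i < n \<and> M j i \<and> i \<in> v})}"

definition gf2_matmul :: "nat \<Rightarrow> (nat \<Rightarrow> nat \<Rightarrow> bool) \<Rightarrow> (nat \<Rightarrow> nat \<Rightarrow> bool) \<Rightarrow> nat \<Rightarrow> nat \<Rightarrow> bool" where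
  "gf2_matmul n A B i j = odd (card {k. k < n \<and> A i k \<and> B k j})"

definition gf2_invertible :: "nat \<Rightarrow> (nat \<Rightarrow> nat \<Rightarrow> bool) \<Rightarrow> bool" where
  "gf2_invertible n A = (\<exists>B. \<forall>i<n. \<forall>j<n.
      gf2_matmul n A B i j = (i = j) \<and> gf2_matmul n B A i j = (i = j))"

definition upper_triangular_gf2 :: "nat \<Rightarrow> (nat \<Rightarrow> nat \<Rightarrow> bool) \<Rightarrow> bool" where
  "upper_triangular_gf2 n A = (\<forall>i<n. \<forall>j<n. j < i \<longrightarrow> \<not> A i j)"

text \<open>Matousek-type USO with sink s: o(v) = M (v xor s) on the cube, where
  M = P A P^T, i.e. M j i = A (sigma j) (sigma i) for a permutation sigma of {0..<n}.\<close>

definition matousek_uso :: "nat \<Rightarrow> (nat set \<Rightarrow> nat set) \<Rightarrow> bool" where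
  "matousek_uso n out = (\<exists>\<sigma> A s. \<sigma> permutes {..<n} \<and> upper_triangular_gf2 n A \<and>
      gf2_invertible n A \<and> s \<subseteq> {..<n} \<and>
      (\<forall>v. v \<subseteq> {..<n} \<longrightarrow>
         out v = gf2_matvec n (\<lambda>j i. A (\<sigma> j) (\<sigma> i)) (vxor v s)))"

definition P_matrix :: "nat \<Rightarrow> real mat \<Rightarrow> bool" where
  "P_matrix n M = (M \<in> carrier_mat n n \<and>
      (\<forall>I. I \<subseteq> {..<n} \<longrightarrow> I \<noteq> {} \<longrightarrow> det (submatrix M I I) > 0))"

definition sw_basis :: "nat \<Rightarrow> real mat \<Rightarrow> nat set \<Rightarrow> real mat" where
  "sw_basis n M v = mat n n (\<lambda>(i,j). if j \<in> v then - (M $$ (i,j)) else (if i = j then 1 else 0))"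

definition sw_sol :: "nat \<Rightarrow> real mat \<Rightarrow> real vec \<Rightarrow> nat set \<Rightarrow> real vec" where
  "sw_sol n M q v = (THE x. x \<in> carrier_vec n \<and> sw_basis n M v *\<^sub>v x = q)"

definition nondegenerate_lcp :: "nat \<Rightarrow> real mat \<Rightarrow> real vec \<Rightarrow> bool" where
  "nondegenerate_lcp n M q = (\<forall>v. v \<subseteq> {..<n} \<longrightarrow> (\<forall>i<n. sw_sol n M q v $ i \<noteq> 0))"

definition sw_outmap :: "nat \<Rightarrow> real mat \<Rightarrow> real vec \<Rightarrow> nat set \<Rightarrow> nat set" where
  "sw_outmap n M q v = {i. i < n \<and> sw_sol n M q v $ i < 0}"

definition realizable :: "nat \<Rightarrow> (nat set \<Rightarrow> nat set) \<Rightarrow> bool" where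
  "realizable n out = (\<exists>M q. P_matrix n M \<and> q \<in> carrier_vec n \<and> nondegenerate_lcp n M q \<and>
      (\<forall>v. v \<subseteq> {..<n} \<longrightarrow> out v = sw_outmap n M q v))"

text \<open>Deterministic query algorithms as (possibly infinite-branching) decision trees:
  either output a vertex, or query a vertex and continue depending on the answer.\<close>

datatype qalg = Answer "nat set" | Query "nat set" "nat set \<Rightarrow> qalg"

primrec run_result :: "qalg \<Rightarrow> (nat set \<Rightarrow> nat set) \<Rightarrow> nat set" where
  "run_result (Answer v) out = v"
| "run_result (Query v k) out = run_result (k (out v)) out"

primrec run_queries :: "qalg \<Rightarrow> (nat set \<Rightarrow> nat set) \<Rightarrow> nat" where
  "run_queries (Answer v) out = 0"
| "run_queries (Query v k) out = Suc (run_queries (k (out v)) out)"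

definition is_sink :: "nat \<Rightarrow> (nat set \<Rightarrow> nat set) \<Rightarrow> nat set \<Rightarrow> bool" where
  "is_sink n out v = (v \<subseteq> {..<n} \<and> out v = {})"

end

theory Submission
  imports Defs
begin

lemma basis_row:
  assumes x: "x \<in> carrier_vec n" and r: "r < n"
  shows "(sw_basis n M v *\<^sub>v x) $ r = (if r \<in> v then 0 else x $ r) - (\<Sum>j\<in>{j. j<n \<and> j\<in>v}. M $$ (r,j) * x $ j)"
proof -
  have "(sw_basis n M v *\<^sub>v x) $ r = (\<Sum>j<n. (if j \<in> v then - (M $$ (r,j)) else (if r = j then 1 else 0)) * x $ j)"
    using x r by (simp add: sw_basis_def mult_mat_vec_def scalar_prod_def lessThan_atLeast0)
  also have "\<dots> = (\<Sum>j<n. (if j \<notin> v \<and> r = j then x $ j else 0)) - (\<Sum>j<n. (if j \<in> v then M $$ (r,j) * x $ j else 0))"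
    by (subst sum_subtractf[symmetric]) (rule sum.cong; simp)
  also have "(\<Sum>j<n. (if j \<notin> v \<and> r = j then x $ j else 0)) = (\<Sum>j<n. (if j = r then (if r \<in> v then 0 else x $ r) else 0))"
    by (rule sum.cong) auto
  also have "\<dots> = (if r \<in> v then 0 else x $ r)"
    using r by (subst sum.delta) auto
  also have "(\<Sum>j<n. (if j \<in> v then M $$ (r,j) * x $ j else 0)) = (\<Sum>j\<in>{j. j<n \<and> j\<in>v}. M $$ (r,j) * x $ j)"
    by (simp add: sum.inter_filter[symmetric] lessThan_def conj_commute)
  finally show ?thesis .
qed

lemma det2: assumes "A \<in> carrier_mat 2 2" shows "det A = A$$(0,0)*A$$(1,1) - A$$(0,1)*A$$(1,0)"
proof -
  have "det A = (\<Sum>j<2. A $$ (0,j) * cofactor A 0 j)" by (rule laplace_expansion_row[OF assms]) auto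
  also have "\<dots> = A$$(0,0) * cofactor A 0 0 + A$$(0,1) * cofactor A 0 1" by (simp add: numeral_2_eq_2)
  also have "cofactor A 0 0 = A$$(1,1)" unfolding cofactor_def using assms
    by (subst det_single) (auto simp: mat_delete_def)
  also have "cofactor A 0 1 = - A$$(1,0)" unfolding cofactor_def using assms
    by (subst det_single) (auto simp: mat_delete_def)
  finally show ?thesis by simp
qed

lemma P_diag: assumes "P_matrix n M" "a < n" shows "M $$ (a,a) > 0"
proof -
  have M: "M \<in> carrier_mat n n" using assms by (simp add: P_matrix_def)
  then have dr: "dim_row M = n" and dc: "dim_col M = n" by auto
  have c: "{r. r < n \<and> r \<in> {a}} = {a}" using assms by blast
  have h: "card {r. r < n \<and> r \<in> {a}} = 1" unfolding c by simp
  have S: "submatrix M {a} {a} \<in> carrier_mat 1 1"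
    unfolding carrier_mat_def mem_Collect_eq dim_submatrix dr dc by (intro conjI h)
  have e: "submatrix M {a} {a} $$ (card {x\<in>{a}. x < a}, card {x\<in>{a}. x < a}) = M $$ (a,a)"
    by (rule submatrix_index_card) (use M assms in auto)
  have c0: "{x\<in>{a}. x < a} = {}" by auto
  have "det (submatrix M {a} {a}) > 0" using assms by (auto simp: P_matrix_def)
  then show ?thesis using det_single[OF S] e unfolding c0 by simp
qed

lemma sub2_carrier: assumes "P_matrix n M" "i < n" "j < n" "i < j"
  shows "submatrix M {i,j} {i,j} \<in> carrier_mat 2 2"
proof -
  have M: "M \<in> carrier_mat n n" using assms by (simp add: P_matrix_def)
  then have dr: "dim_row M = n" and dc: "dim_col M = n" by auto
  have c: "{r. r < n \<and> r \<in> {i,j}} = {i,j}" using assms by blast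
  have cc: "card {i,j} = 2" using assms by simp
  have h: "card {r. r < n \<and> r \<in> {i,j}} = 2" unfolding c by (rule cc)
  then show ?thesis unfolding carrier_mat_def mem_Collect_eq dim_submatrix dr dc by (intro conjI h)
qed

lemma P_2x2_lt: assumes "P_matrix n M" "i < n" "j < n" "i < j"
  shows "M $$ (i,i) * M $$ (j,j) - M $$ (i,j) * M $$ (j,i) > 0"
proof -
  have M: "M \<in> carrier_mat n n" using assms by (simp add: P_matrix_def)
  have c0: "{x\<in>{i,j}. x < i} = {}" using assms by auto
  have c1: "{x\<in>{i,j}. x < j} = {i}" using assms by auto
  have e00: "submatrix M {i,j} {i,j} $$ (card {x\<in>{i,j}. x < i}, card {x\<in>{i,j}. x < i}) = M $$ (i,i)"
    by (rule submatrix_index_card) (use M assms in auto)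
  have e01: "submatrix M {i,j} {i,j} $$ (card {x\<in>{i,j}. x < i}, card {x\<in>{i,j}. x < j}) = M $$ (i,j)"
    by (rule submatrix_index_card) (use M assms in auto)
  have e10: "submatrix M {i,j} {i,j} $$ (card {x\<in>{i,j}. x < j}, card {x\<in>{i,j}. x < i}) = M $$ (j,i)"
    by (rule submatrix_index_card) (use M assms in auto)
  have e11: "submatrix M {i,j} {i,j} $$ (card {x\<in>{i,j}. x < j}, card {x\<in>{i,j}. x < j}) = M $$ (j,j)"
    by (rule submatrix_index_card) (use M assms in auto)
  have "det (submatrix M {i,j} {i,j}) > 0" using assms by (auto simp: P_matrix_def)
  then show ?thesis using det2[OF sub2_carrier[OF assms]] e00 e01 e10 e11 unfolding c0 c1 by simp
qed

lemma P_2x2: assumes "P_matrix n M" "i < n" "j < n" "i \<noteq> j"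
  shows "M $$ (i,i) * M $$ (j,j) - M $$ (i,j) * M $$ (j,i) > 0"
proof (cases "i < j")
  case True then show ?thesis using P_2x2_lt assms by blast
next
  case False then have "j < i" using assms by auto
  from P_2x2_lt[OF assms(1) assms(3) assms(2) this] show ?thesis by (simp add: algebra_simps)
qed

lemma sol_unique:
  assumes "x \<in> carrier_vec n" "sw_basis n M v *\<^sub>v x = q"
    "\<And>y. y \<in> carrier_vec n \<Longrightarrow> sw_basis n M v *\<^sub>v y = q \<Longrightarrow> y = x"
  shows "sw_sol n M q v = x"
  unfolding sw_sol_def by (rule the_equality) (use assms in blast)+

lemma row_eq:
  assumes "y \<in> carrier_vec n" "sw_basis n M v *\<^sub>v y = q" "r < n" "v \<subseteq> {..<n}"
  shows "(if r \<in> v then 0 else y $ r) - (\<Sum>j\<in>v. M $$ (r,j) * y $ j) = q $ r"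
proof -
  have "{j. j<n \<and> j\<in>v} = v" using assms(4) by auto
  then show ?thesis using basis_row[OF assms(1) assms(3), of M v] assms(2) by simp
qed

lemma vec_from_rows:
  assumes "y \<in> carrier_vec n" "q \<in> carrier_vec n" "v \<subseteq> {..<n}"
    "\<And>r. r < n \<Longrightarrow> (if r \<in> v then 0 else y $ r) - (\<Sum>j\<in>v. M $$ (r,j) * y $ j) = q $ r"
  shows "sw_basis n M v *\<^sub>v y = q"
proof (rule eq_vecI)
  show "dim_vec (sw_basis n M v *\<^sub>v y) = dim_vec q" using assms by (simp add: sw_basis_def)
  fix r assume "r < dim_vec q"
  then have r: "r < n" using assms by simp
  have "{j. j<n \<and> j\<in>v} = v" using assms(3) by auto
  then show "(sw_basis n M v *\<^sub>v y) $ r = q $ r" using basis_row[OF assms(1) r] assms(4)[OF r] by simp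
qed

lemma sol_empty: assumes "q \<in> carrier_vec n" shows "sw_sol n M q {} = q"
proof (rule sol_unique)
  have sub: "{} \<subseteq> {..<n}" by simp
  show "q \<in> carrier_vec n" by fact
  show "sw_basis n M {} *\<^sub>v q = q" by (rule vec_from_rows) (use assms in auto)
  fix y assume y: "y \<in> carrier_vec n" "sw_basis n M {} *\<^sub>v y = q"
  show "y = q"
  proof (rule eq_vecI)
    fix r assume "r < dim_vec q" then have r: "r < n" using assms by simp
    show "y $ r = q $ r" using row_eq[OF y r sub] by simp
  qed (use y assms in simp)
qed

definition xs1 :: "nat \<Rightarrow> real mat \<Rightarrow> real vec \<Rightarrow> nat \<Rightarrow> real vec" where
  "xs1 n M q a = vec n (\<lambda>r. if r = a then - (q $ a) / M $$ (a,a) else q $ r - M $$ (r,a) * q $ a / M $$ (a,a))"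

lemma sol_single: assumes P: "P_matrix n M" and q: "q \<in> carrier_vec n" and a: "a < n"
  shows "sw_sol n M q {a} = xs1 n M q a"
proof -
  have m: "M $$ (a,a) > 0" using P_diag[OF P a] .
  have sub: "{a} \<subseteq> {..<n}" using a by auto
  show ?thesis
  proof (rule sol_unique)
    show "xs1 n M q a \<in> carrier_vec n" by (simp add: xs1_def)
    show "sw_basis n M {a} *\<^sub>v xs1 n M q a = q"
      by (rule vec_from_rows) (use q a m sub in \<open>auto simp: xs1_def field_simps\<close>)
    fix y assume y: "y \<in> carrier_vec n" "sw_basis n M {a} *\<^sub>v y = q"
    have ya: "y $ a = - (q $ a) / M $$ (a,a)" using row_eq[OF y a sub] m by (simp add: field_simps)
    show "y = xs1 n M q a"
    proof (rule eq_vecI)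
      fix r assume "r < dim_vec (xs1 n M q a)" then have r: "r < n" by (simp add: xs1_def)
      show "y $ r = xs1 n M q a $ r"
      proof (cases "r = a")
        case True then show ?thesis using ya r by (simp add: xs1_def)
      next
        case False then show ?thesis using row_eq[OF y r sub] ya r m by (simp add: xs1_def field_simps)
      qed
    qed (use y in \<open>simp add: xs1_def\<close>)
  qed
qed

definition xs2 :: "nat \<Rightarrow> real mat \<Rightarrow> real vec \<Rightarrow> nat \<Rightarrow> nat \<Rightarrow> real vec" where
  "xs2 n M q i j = (let D = M $$ (i,i) * M $$ (j,j) - M $$ (i,j) * M $$ (j,i);
      Xi = - (M $$ (j,j) * q $ i - M $$ (i,j) * q $ j) / D;
      Xj = - (M $$ (i,i) * q $ j - M $$ (j,i) * q $ i) / D in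
     vec n (\<lambda>r. if r = i then Xi else if r = j then Xj else q $ r + M $$ (r,i) * Xi + M $$ (r,j) * Xj))"

lemma sol_pair: assumes P: "P_matrix n M" and q: "q \<in> carrier_vec n" and i: "i < n" and j: "j < n" and ij: "i \<noteq> j"
  shows "sw_sol n M q {i,j} = xs2 n M q i j"
proof -
  define D where "D = M $$ (i,i) * M $$ (j,j) - M $$ (i,j) * M $$ (j,i)"
  have D: "D > 0" using P_2x2[OF P i j ij] by (simp add: D_def)
  define Xi where "Xi = - (M $$ (j,j) * q $ i - M $$ (i,j) * q $ j) / D"
  define Xj where "Xj = - (M $$ (i,i) * q $ j - M $$ (j,i) * q $ i) / D"
  have X: "xs2 n M q i j = vec n (\<lambda>r. if r = i then Xi else if r = j then Xj else q $ r + M $$ (r,i) * Xi + M $$ (r,j) * Xj)"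
    unfolding xs2_def Let_def D_def Xi_def Xj_def ..
  have sub: "{i,j} \<subseteq> {..<n}" using i j by auto
  have sum2: "\<And>f. (\<Sum>r\<in>{i,j}. f r) = f i + f j" using ij by simp
  have XiD: "Xi * D = - (M $$ (j,j) * q $ i - M $$ (i,j) * q $ j)" using D by (simp add: Xi_def)
  have XjD: "Xj * D = - (M $$ (i,i) * q $ j - M $$ (j,i) * q $ i)" using D by (simp add: Xj_def)
  have "D * (- (M $$ (i,i) * Xi) - M $$ (i,j) * Xj) = - M $$ (i,i) * (Xi * D) - M $$ (i,j) * (Xj * D)"
    by (simp add: algebra_simps)
  also have "\<dots> = D * q $ i" unfolding XiD XjD by (simp add: D_def algebra_simps)
  finally have eqi: "- (M $$ (i,i) * Xi) - M $$ (i,j) * Xj = q $ i" using D by simp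
  have "D * (- (M $$ (j,i) * Xi) - M $$ (j,j) * Xj) = - M $$ (j,i) * (Xi * D) - M $$ (j,j) * (Xj * D)"
    by (simp add: algebra_simps)
  also have "\<dots> = D * q $ j" unfolding XiD XjD by (simp add: D_def algebra_simps)
  finally have eqj: "- (M $$ (j,i) * Xi) - M $$ (j,j) * Xj = q $ j" using D by simp
  show ?thesis unfolding X
  proof (rule sol_unique)
    show "vec n (\<lambda>r. if r = i then Xi else if r = j then Xj else q $ r + M $$ (r,i) * Xi + M $$ (r,j) * Xj) \<in> carrier_vec n" by simp
    show "sw_basis n M {i,j} *\<^sub>v vec n (\<lambda>r. if r = i then Xi else if r = j then Xj else q $ r + M $$ (r,i) * Xi + M $$ (r,j) * Xj) = q"
      by (rule vec_from_rows) (use q i j ij eqi eqj sub in \<open>auto simp: sum2\<close>)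
    fix y assume y: "y \<in> carrier_vec n" "sw_basis n M {i,j} *\<^sub>v y = q"
    have ri: "- (M $$ (i,i) * y $ i) - M $$ (i,j) * y $ j = q $ i" using row_eq[OF y i sub] by (simp add: sum2)
    have rj: "- (M $$ (j,i) * y $ i) - M $$ (j,j) * y $ j = q $ j" using row_eq[OF y j sub] by (simp add: sum2)
    have "D * y $ i = - (M $$ (j,j) * q $ i - M $$ (i,j) * q $ j)"
      unfolding D_def ri[symmetric] rj[symmetric] by (simp add: algebra_simps)
    then have yi: "y $ i = Xi" unfolding Xi_def using D by (simp add: field_simps)
    have "D * y $ j = - (M $$ (i,i) * q $ j - M $$ (j,i) * q $ i)"
      unfolding D_def ri[symmetric] rj[symmetric] by (simp add: algebra_simps)
    then have yj: "y $ j = Xj" unfolding Xj_def using D by (simp add: field_simps)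
    show "y = vec n (\<lambda>r. if r = i then Xi else if r = j then Xj else q $ r + M $$ (r,i) * Xi + M $$ (r,j) * Xj)"
    proof (rule eq_vecI)
      fix r assume "r < dim_vec (vec n (\<lambda>r. if r = i then Xi else if r = j then Xj else q $ r + M $$ (r,i) * Xi + M $$ (r,j) * Xj))"
      then have r: "r < n" by simp
      show "y $ r = vec n (\<lambda>r. if r = i then Xi else if r = j then Xj else q $ r + M $$ (r,i) * Xi + M $$ (r,j) * Xj) $ r"
        using row_eq[OF y r sub] yi yj r by (auto simp: sum2 algebra_simps)
    qed (use y in simp)
  qed
qed

lemma sign_ratio: fixes x y :: real assumes "x \<noteq> 0" "y \<noteq> 0"
  shows "((x < 0) \<noteq> (y < 0)) \<longleftrightarrow> x / y < 0"
  using assms by (auto simp: divide_less_0_iff)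

lemma ratio2:
  fixes mii mjj mij mji mki mkj qi qj qk :: real
  assumes "mii > 0" "mjj > 0" "mii * mjj - mij * mji > 0" "qi \<noteq> 0" "qj \<noteq> 0" "qk \<noteq> 0"
  shows "(qk + mki * (- (mjj * qi - mij * qj) / (mii * mjj - mij * mji)) + mkj * (- (mii * qj - mji * qi) / (mii * mjj - mij * mji))) / qk
    = 1 - ((mki * qi / (qk * mii)) * (1 - mij * qj / (qi * mjj)) + (mkj * qj / (qk * mjj)) * (1 - mji * qi / (qj * mii)))
          / (1 - (mij * qj / (qi * mjj)) * (mji * qi / (qj * mii)))"
proof -
  define D where "D = mii * mjj - mij * mji"
  have D: "D > 0" using assms by (simp add: D_def)
  have E: "1 - (mij * qj / (qi * mjj)) * (mji * qi / (qj * mii)) = D / (mii * mjj)"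
    using assms by (simp add: field_simps D_def)
  have c1: "(mki * qi / (qk * mii)) * (1 - mij * qj / (qi * mjj)) = mki * (mjj * qi - mij * qj) / (qk * mii * mjj)"
    using assms by (simp add: field_simps)
  have e1: "(mkj * qj / (qk * mjj)) * (1 - mji * qi / (qj * mii)) = mkj * (mii * qj - mji * qi) / (qk * mii * mjj)"
    using assms by (simp add: field_simps)
  have S: "mki * (mjj * qi - mij * qj) / (qk * mii * mjj) + mkj * (mii * qj - mji * qi) / (qk * mii * mjj)
      = (mki * (mjj * qi - mij * qj) + mkj * (mii * qj - mji * qi)) / (qk * mii * mjj)"
    by (simp add: add_divide_distrib)
  have Q: "(mki * (mjj * qi - mij * qj) + mkj * (mii * qj - mji * qi)) / (qk * mii * mjj) / (D / (mii * mjj))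
      = (mki * (mjj * qi - mij * qj) + mkj * (mii * qj - mji * qi)) / (qk * D)"
    using assms D by (simp add: field_simps)
  have L: "(qk + mki * (- (mjj * qi - mij * qj) / D) + mkj * (- (mii * qj - mji * qi) / D)) / qk
      = 1 - (mki * (mjj * qi - mij * qj) + mkj * (mii * qj - mji * qi)) / (qk * D)"
    using assms D by (simp add: field_simps)
  show ?thesis unfolding E c1 e1 S Q D_def[symmetric] L ..
qed

lemma prod_lt1:
  fixes mii mjj mij mji qi qj :: real
  assumes "mii > 0" "mjj > 0" "mii * mjj - mij * mji > 0" "qi \<noteq> 0" "qj \<noteq> 0"
  shows "(mij * qj / (qi * mjj)) * (mji * qi / (qj * mii)) < 1"
proof -
  have "(mij * qj / (qi * mjj)) * (mji * qi / (qj * mii)) = (mij * mji) / (mii * mjj)"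
    using assms by (simp add: field_simps)
  also have "\<dots> < 1" using assms by (simp add: divide_less_eq)
  finally show ?thesis .
qed

lemma anti_ineq: fixes a b :: real assumes "a * b < 1" "a > 1" "b > 1" shows False
proof -
  have "1 < a * b" using assms using less_1_mult by blast
  then show False using assms by simp
qed

lemma trans_ineq: fixes a b c e :: real
  assumes "a * b < 1" "b > 1" "e > 1" "c < 1" "1 - (c * (1 - a) + e * (1 - b)) / (1 - a * b) < 0"
  shows False
proof -
  have a: "a < 1" using assms(1,2) by (metis anti_ineq not_less_iff_gr_or_eq mult.commute mult_cancel_left2 less_trans) 
  have p: "1 - a * b > 0" using assms by simp
  have "c * (1 - a) < 1 - a" using a assms by (simp add: mult_less_cancel_right)
  moreover have "e * (1 - b) < 1 - b" using assms by (simp add: mult_less_cancel_right)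
  moreover have "(1 - a) * (1 - b) \<le> 0" using a assms by (simp add: mult_nonneg_nonpos)
  ultimately have "c * (1 - a) + e * (1 - b) < 1 - a * b" by (simp add: algebra_simps)
  then have "(c * (1 - a) + e * (1 - b)) / (1 - a * b) < 1" using p by simp
  then show False using assms by simp
qed

lemma coll_ineq: fixes a b c e :: real
  assumes "a * b < 1" "a < 1" "b < 1" "c > 1" "e > 1" "1 - (c * (1 - a) + e * (1 - b)) / (1 - a * b) > 0"
  shows False
proof -
  have p: "1 - a * b > 0" using assms by simp
  have "c * (1 - a) > 1 - a" using assms by (simp add: mult_less_cancel_right)
  moreover have "e * (1 - b) > 1 - b" using assms by (simp add: mult_less_cancel_right)
  moreover have "(1 - a) * (1 - b) > 0" using assms by simp
  ultimately have "c * (1 - a) + e * (1 - b) > 1 - a * b" by (simp add: algebra_simps)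
  then have "(c * (1 - a) + e * (1 - b)) / (1 - a * b) > 1" using p by simp
  then show False using assms by simp
qed

lemma lcp_struct:
  fixes Mr :: "real mat" and q :: "real vec" and R :: "nat \<Rightarrow> nat \<Rightarrow> bool"
  assumes P: "P_matrix n Mr" and q: "q \<in> carrier_vec n" and nd: "nondegenerate_lcp n Mr q"
    and H: "\<And>v r. v \<subseteq> {..<n} \<Longrightarrow> r < n \<Longrightarrow>
        (sw_sol n Mr q v $ r < 0) \<longleftrightarrow> (odd (card ({i. i < n \<and> R i r} \<inter> v)) \<noteq> (q $ r < 0))"
  shows "\<forall>a<n. R a a"
    and "\<forall>a<n. \<forall>b<n. R a b \<and> R b a \<longrightarrow> a = b"
    and "\<forall>i<n. \<forall>j<n. \<forall>k<n. R i j \<and> R j k \<longrightarrow> R i k"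
    and "\<forall>i<n. \<forall>j<n. \<forall>k<n. R i k \<and> R j k \<longrightarrow> R i j \<or> R j i"
proof -
  let ?m = "\<lambda>r a. Mr $$ (r,a)"
  define nn where "nn r a = ?m r a * q $ a / (q $ r * ?m a a)" for r a
  have mpos: "\<And>a. a < n \<Longrightarrow> ?m a a > 0" using P_diag[OF P] by blast
  have qnz: "\<And>r. r < n \<Longrightarrow> q $ r \<noteq> 0"
    using nd sol_empty[OF q, of Mr] unfolding nondegenerate_lcp_def by (metis empty_subsetI)
  have sub1: "\<And>a. a < n \<Longrightarrow> {a} \<subseteq> {..<n}" by auto
  have sub2: "\<And>a b. a < n \<Longrightarrow> b < n \<Longrightarrow> {a,b} \<subseteq> {..<n}" by auto
  have c1: "\<And>a r. odd (card ({i. i < n \<and> R i r} \<inter> {a})) \<longleftrightarrow> (a < n \<and> R a r)"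
    by (simp add: Int_insert_right)
  have c2: "\<And>a b r. a \<noteq> b \<Longrightarrow> a < n \<Longrightarrow> b < n \<Longrightarrow> odd (card ({i. i < n \<and> R i r} \<inter> {a,b})) \<longleftrightarrow> (R a r \<noteq> R b r)"
    by (auto simp: Int_insert_right)
  have flip1: "\<And>a r. a < n \<Longrightarrow> r < n \<Longrightarrow> (xs1 n Mr q a $ r < 0) \<longleftrightarrow> ((q $ r < 0) \<noteq> R a r)"
    using H[OF sub1] sol_single[OF P q] c1 by auto
  have flip2: "\<And>i j r. i < n \<Longrightarrow> j < n \<Longrightarrow> i \<noteq> j \<Longrightarrow> r < n \<Longrightarrow>
      (xs2 n Mr q i j $ r < 0) \<longleftrightarrow> ((q $ r < 0) \<noteq> (R i r \<noteq> R j r))"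
  proof -
    fix i j r assume a: "i < n" "j < n" "i \<noteq> j" "r < n"
    show "(xs2 n Mr q i j $ r < 0) \<longleftrightarrow> ((q $ r < 0) \<noteq> (R i r \<noteq> R j r))"
      using H[OF sub2[OF a(1,2)] a(4)] sol_pair[OF P q a(1,2,3)] c2[OF a(3,1,2)] by auto
  qed
  have nz1: "\<And>a r. a < n \<Longrightarrow> r < n \<Longrightarrow> xs1 n Mr q a $ r \<noteq> 0"
    using nd sol_single[OF P q] sub1 unfolding nondegenerate_lcp_def by metis
  have nz2: "\<And>i j r. i < n \<Longrightarrow> j < n \<Longrightarrow> i \<noteq> j \<Longrightarrow> r < n \<Longrightarrow> xs2 n Mr q i j $ r \<noteq> 0"
    using nd sol_pair[OF P q] sub2 unfolding nondegenerate_lcp_def by metis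
  have x1: "\<And>a r. a < n \<Longrightarrow> r < n \<Longrightarrow> r \<noteq> a \<Longrightarrow> xs1 n Mr q a $ r / q $ r = 1 - nn r a"
  proof -
    fix a r assume a: "a < n" "r < n" "r \<noteq> a"
    have "xs1 n Mr q a $ r = q $ r - ?m r a * q $ a / ?m a a" using a by (simp add: xs1_def)
    then show "xs1 n Mr q a $ r / q $ r = 1 - nn r a"
      using qnz[OF a(2)] mpos[OF a(1)] by (simp add: nn_def field_simps)
  qed
  have R1: "\<And>a r. a < n \<Longrightarrow> r < n \<Longrightarrow> r \<noteq> a \<Longrightarrow> R a r \<longleftrightarrow> nn r a > 1"
  proof -
    fix a r assume a: "a < n" "r < n" "r \<noteq> a"
    have "R a r \<longleftrightarrow> ((xs1 n Mr q a $ r < 0) \<noteq> (q $ r < 0))" using flip1[OF a(1,2)] by auto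
    also have "\<dots> \<longleftrightarrow> xs1 n Mr q a $ r / q $ r < 0" by (rule sign_ratio[OF nz1[OF a(1,2)] qnz[OF a(2)]])
    also have "\<dots> \<longleftrightarrow> nn r a > 1" using x1[OF a] by simp
    finally show "R a r \<longleftrightarrow> nn r a > 1" .
  qed
  have R0: "\<And>a r. a < n \<Longrightarrow> r < n \<Longrightarrow> r \<noteq> a \<Longrightarrow> \<not> R a r \<Longrightarrow> nn r a < 1"
  proof -
    fix a r assume a: "a < n" "r < n" "r \<noteq> a" "\<not> R a r"
    have "nn r a \<noteq> 1" using x1[OF a(1-3)] nz1[OF a(1,2)] qnz[OF a(2)] by auto
    then show "nn r a < 1" using R1[OF a(1-3)] a(4) by simp
  qed
  have pl: "\<And>i j. i < n \<Longrightarrow> j < n \<Longrightarrow> i \<noteq> j \<Longrightarrow> nn i j * nn j i < 1"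
  proof -
    fix i j assume a: "i < n" "j < n" "i \<noteq> j"
    show "nn i j * nn j i < 1" unfolding nn_def
      by (rule prod_lt1[OF mpos[OF a(1)] mpos[OF a(2)] P_2x2[OF P a] qnz[OF a(1)] qnz[OF a(2)]])
  qed
  have x2: "\<And>i j k. i < n \<Longrightarrow> j < n \<Longrightarrow> k < n \<Longrightarrow> i \<noteq> j \<Longrightarrow> k \<noteq> i \<Longrightarrow> k \<noteq> j \<Longrightarrow>
      xs2 n Mr q i j $ k / q $ k = 1 - (nn k i * (1 - nn i j) + nn k j * (1 - nn j i)) / (1 - nn i j * nn j i)"
  proof -
    fix i j k assume a: "i < n" "j < n" "k < n" "i \<noteq> j" "k \<noteq> i" "k \<noteq> j"
    have "xs2 n Mr q i j $ k = q $ k + ?m k i * (- (?m j j * q $ i - ?m i j * q $ j) / (?m i i * ?m j j - ?m i j * ?m j i))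
        + ?m k j * (- (?m i i * q $ j - ?m j i * q $ i) / (?m i i * ?m j j - ?m i j * ?m j i))"
      using a by (simp add: xs2_def Let_def)
    then show "xs2 n Mr q i j $ k / q $ k = 1 - (nn k i * (1 - nn i j) + nn k j * (1 - nn j i)) / (1 - nn i j * nn j i)"
      unfolding nn_def using ratio2[OF mpos[OF a(1)] mpos[OF a(2)] P_2x2[OF P a(1,2,4)] qnz[OF a(1)] qnz[OF a(2)] qnz[OF a(3)]]
      by simp
  qed
  show "\<forall>a<n. R a a"
  proof (intro allI impI)
    fix a assume a: "a < n"
    have "xs1 n Mr q a $ a = - (q $ a) / ?m a a" using a by (simp add: xs1_def)
    then have "(xs1 n Mr q a $ a < 0) \<noteq> (q $ a < 0)" using qnz[OF a] mpos[OF a]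
      by (cases "q $ a < 0") (auto simp: divide_less_0_iff zero_less_divide_iff)
    then show "R a a" using flip1[OF a a] by auto
  qed
  show "\<forall>a<n. \<forall>b<n. R a b \<and> R b a \<longrightarrow> a = b"
  proof (intro allI impI)
    fix a b assume a: "a < n" "b < n" "R a b \<and> R b a"
    show "a = b"
    proof (rule ccontr)
      assume "a \<noteq> b"
      then show False using R1[OF a(1,2)] R1[OF a(2,1)] a(3) pl[OF a(1,2)] anti_ineq by (metis)
    qed
  qed
  show "\<forall>i<n. \<forall>j<n. \<forall>k<n. R i j \<and> R j k \<longrightarrow> R i k"
  proof (intro allI impI)
    fix i j k assume a: "i < n" "j < n" "k < n" "R i j \<and> R j k"
    show "R i k"
    proof (cases "i = j \<or> j = k \<or> i = k")
      case True then show ?thesis using a \<open>\<forall>a<n. R a a\<close> \<open>\<forall>a<n. \<forall>b<n. R a b \<and> R b a \<longrightarrow> a = b\<close> by metis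
    next
      case False
      then have d: "i \<noteq> j" "k \<noteq> i" "k \<noteq> j" by auto
      show ?thesis
      proof (rule ccontr)
        assume nik: "\<not> R i k"
        have b: "nn j i > 1" using R1[OF a(1,2)] a(4) d by auto
        have e: "nn k j > 1" using R1[OF a(2,3)] a(4) d by auto
        have c: "nn k i < 1" using R0[OF a(1,3) d(2) nik] .
        have fl: "xs2 n Mr q i j $ k / q $ k < 0"
          using flip2[OF a(1,2) d(1) a(3)] nik a(4) sign_ratio[OF nz2[OF a(1,2) d(1) a(3)] qnz[OF a(3)]] by auto
        show False using trans_ineq[OF pl[OF a(1,2) d(1)] b e c] fl x2[OF a(1-3) d] by simp
      qed
    qed
  qed
  show "\<forall>i<n. \<forall>j<n. \<forall>k<n. R i k \<and> R j k \<longrightarrow> R i j \<or> R j i"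
  proof (intro allI impI)
    fix i j k assume a: "i < n" "j < n" "k < n" "R i k \<and> R j k"
    show "R i j \<or> R j i"
    proof (cases "i = j \<or> j = k \<or> i = k")
      case True then show ?thesis using a \<open>\<forall>a<n. R a a\<close> by metis
    next
      case False
      then have d: "i \<noteq> j" "k \<noteq> i" "k \<noteq> j" by auto
      show ?thesis
      proof (rule ccontr)
        assume nn0: "\<not> (R i j \<or> R j i)"
        have aa: "nn i j < 1" using R0[OF a(2,1)] d nn0 by auto
        have bb: "nn j i < 1" using R0[OF a(1,2)] d nn0 by auto
        have c: "nn k i > 1" using R1[OF a(1,3)] a(4) d by auto
        have e: "nn k j > 1" using R1[OF a(2,3)] a(4) d by auto
        have fl: "\<not> xs2 n Mr q i j $ k / q $ k < 0"
          using flip2[OF a(1,2) d(1) a(3)] a(4) sign_ratio[OF nz2[OF a(1,2) d(1) a(3)] qnz[OF a(3)]] by auto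
        have "xs2 n Mr q i j $ k / q $ k \<noteq> 0" using nz2[OF a(1,2) d(1) a(3)] qnz[OF a(3)] by simp
        with fl have "xs2 n Mr q i j $ k / q $ k > 0" by linarith
        then show False using coll_ineq[OF pl[OF a(1,2) d(1)] aa bb c e] x2[OF a(1-3) d] by simp
      qed
    qed
  qed
qed


lemma odd_card_vxor:
  assumes "finite A"
  shows "odd (card (A \<inter> vxor v s)) \<longleftrightarrow> (odd (card (A \<inter> v)) \<noteq> odd (card (A \<inter> s)))"
proof -
  let ?X = "A \<inter> v - s" and ?Y = "A \<inter> s - v" and ?Z = "A \<inter> v \<inter> s"
  have f: "finite ?X" "finite ?Y" "finite ?Z" using assms by auto
  have e1: "A \<inter> vxor v s = ?X \<union> ?Y" by (auto simp: vxor_def)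
  have e2: "A \<inter> v = ?X \<union> ?Z" by auto
  have e3: "A \<inter> s = ?Y \<union> ?Z" by auto
  have c1: "card (A \<inter> vxor v s) = card ?X + card ?Y" unfolding e1 by (rule card_Un_disjoint) (use f in auto)
  have "card (?X \<union> ?Z) = card ?X + card ?Z" by (rule card_Un_disjoint) (use f in auto)
  then have c2: "card (A \<inter> v) = card ?X + card ?Z" by (simp only: e2[symmetric])
  have "card (?Y \<union> ?Z) = card ?Y + card ?Z" by (rule card_Un_disjoint) (use f in auto)
  then have c3: "card (A \<inter> s) = card ?Y + card ?Z" by (simp only: e3[symmetric])
  show ?thesis unfolding c1 c2 c3 by presburger
qed

lemma mod_pow_Suc: "(d::nat) mod 2 ^ Suc m = d mod 2 ^ m + (if bit d m then 2 ^ m else 0)"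
  using take_bit_Suc_from_most[of m d] by (simp add: take_bit_eq_mod)

lemma mod_pow_Suc': "(d::nat) mod (2 * 2 ^ m) = d mod 2 ^ m + (if bit d m then 2 ^ m else 0)"
  using mod_pow_Suc by simp

lemma vxor_iff: "x \<in> vxor A B \<longleftrightarrow> (x \<in> A) \<noteq> (x \<in> B)"
  unfolding vxor_def by auto

definition dec :: "nat \<Rightarrow> (nat \<Rightarrow> bool) \<Rightarrow> nat" where
  "dec L f = (\<Sum>b<L. if f b then 2 ^ b else 0)"

lemma dec_mod: "dec L (\<lambda>b. bit x b) = x mod 2 ^ L"
  by (induction L) (simp_all add: dec_def mod_pow_Suc')

lemma dec_bit: "x < 2 ^ L \<Longrightarrow> dec L (\<lambda>b. bit x b) = x"
  by (simp add: dec_mod)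

lemma dec_cong: "(\<And>b. b < L \<Longrightarrow> f b = g b) \<Longrightarrow> dec L f = dec L g"
  unfolding dec_def by (rule sum.cong) auto

locale cforest =
  fixes n :: nat and R :: "nat \<Rightarrow> nat \<Rightarrow> bool"
  assumes rf: "a < n \<Longrightarrow> R a a"
    and asym: "a < n \<Longrightarrow> b < n \<Longrightarrow> R a b \<Longrightarrow> R b a \<Longrightarrow> a = b"
    and tr: "i < n \<Longrightarrow> j < n \<Longrightarrow> k < n \<Longrightarrow> R i j \<Longrightarrow> R j k \<Longrightarrow> R i k"
    and ch: "i < n \<Longrightarrow> j < n \<Longrightarrow> k < n \<Longrightarrow> R i k \<Longrightarrow> R j k \<Longrightarrow> R i j \<or> R j i"
begin

definition D where "D j = {i. i < n \<and> R i j}"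
definition dep where "dep j = card (D j) - 1"
definition anc where "anc j k = (THE i. i \<in> D j \<and> dep i = k)"
definition G where "G w = {j. j < n \<and> odd (card (D j \<inter> w))}"

lemma finD: "finite (D j)" unfolding D_def by auto
lemma DinD: "j < n \<Longrightarrow> j \<in> D j" unfolding D_def using rf by auto
lemma D_lt: "i \<in> D j \<Longrightarrow> i < n" unfolding D_def by auto
lemma D_sub_n: "D j \<subseteq> {..<n}" unfolding D_def by auto

lemma D_sub: assumes "i \<in> D j" "j < n" shows "D i \<subseteq> D j"
  using assms tr unfolding D_def by blast

lemma D_psub: assumes "i \<in> D j" "j < n" "i \<noteq> j" shows "D i \<subset> D j"
proof -
  have "j \<notin> D i" using assms asym unfolding D_def by blast
  then show ?thesis using D_sub[OF assms(1,2)] DinD[OF assms(2)] by blast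
qed

lemma card_D: "j < n \<Longrightarrow> card (D j) = Suc (dep j)"
  using DinD[of j] finD[of j] unfolding dep_def by (cases "card (D j)") auto

lemma dep_lt: assumes "i \<in> D j" "j < n" "i \<noteq> j" shows "dep i < dep j"
proof -
  have "card (D i) < card (D j)" by (rule psubset_card_mono[OF finD D_psub[OF assms]])
  then show ?thesis using card_D[OF assms(2)] card_D[OF D_lt[OF assms(1)]] by simp
qed

lemma dep_le: assumes "i \<in> D j" "j < n" shows "dep i \<le> dep j"
  using dep_lt[OF assms] by (cases "i = j") auto

lemma dep_inj: assumes "i \<in> D j" "i' \<in> D j" "j < n" "dep i = dep i'" shows "i = i'"
proof -
  have "R i j" "R i' j" "i < n" "i' < n" using assms unfolding D_def by auto
  then have "R i i' \<or> R i' i" using ch[OF \<open>i < n\<close> \<open>i' < n\<close> assms(3)] by simp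
  then show ?thesis
  proof
    assume "R i i'" then have "i \<in> D i'" using \<open>i < n\<close> unfolding D_def by auto
    show ?thesis
    proof (rule ccontr)
      assume "i \<noteq> i'"
      from dep_lt[OF \<open>i \<in> D i'\<close> \<open>i' < n\<close> this] show False using assms(4) by simp
    qed
  next
    assume "R i' i" then have "i' \<in> D i" using \<open>i' < n\<close> unfolding D_def by auto
    show ?thesis
    proof (rule ccontr)
      assume "i \<noteq> i'"
      then have "i' \<noteq> i" by simp
      from dep_lt[OF \<open>i' \<in> D i\<close> \<open>i < n\<close> this] show False using assms(4) by simp
    qed
  qed
qed

lemma dep_lt_n: "j < n \<Longrightarrow> dep j < n"
proof -
  assume j: "j < n"
  have "card (D j) \<le> card {..<n}" by (rule card_mono) (auto simp: D_sub_n)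
  then show ?thesis using card_D[OF j] by simp
qed

lemma dep_image: assumes j: "j < n" shows "dep ` D j = {..dep j}"
proof -
  have inj: "inj_on dep (D j)" using dep_inj[OF _ _ j] by (auto simp: inj_on_def)
  have sub: "dep ` D j \<subseteq> {..dep j}" using dep_le[OF _ j] by auto
  have "card (dep ` D j) = card {..dep j}" using card_image[OF inj] card_D[OF j] by simp
  then show ?thesis using card_subset_eq[OF _ sub] by simp
qed

lemma anc: assumes j: "j < n" and k: "k \<le> dep j" shows "anc j k \<in> D j" "dep (anc j k) = k"
proof -
  have "k \<in> dep ` D j" using dep_image[OF j] k by auto
  then obtain i where i: "i \<in> D j" "dep i = k" by auto
  have "anc j k = i" unfolding anc_def
  proof (rule the_equality)
    show "i \<in> D j \<and> dep i = k" using i by simp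
    fix x assume x: "x \<in> D j \<and> dep x = k"
    show "x = i" by (rule dep_inj[OF conjunct1[OF x] i(1) j]) (use x i(2) in simp)
  qed
  then show "anc j k \<in> D j" "dep (anc j k) = k" using i by auto
qed

lemma anc_lt: "j < n \<Longrightarrow> k \<le> dep j \<Longrightarrow> anc j k < n"
  by (rule D_lt[OF anc(1)])

lemma anc_eq: assumes "j < n" "i \<in> D j" shows "anc j (dep i) = i"
  unfolding anc_def
proof (rule the_equality)
  show "i \<in> D j \<and> dep i = dep i" using assms by simp
  fix x assume x: "x \<in> D j \<and> dep x = dep i"
  show "x = i" by (rule dep_inj[OF conjunct1[OF x] assms(2) assms(1)]) (use x in simp)
qed

lemma anc_top: "j < n \<Longrightarrow> anc j (dep j) = j"
  by (rule anc_eq[OF _ DinD])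

lemma D_anc: assumes j: "j < n" and i: "i \<in> D j" shows "D i = {c \<in> D j. dep c \<le> dep i}"
proof
  have iln: "i < n" using D_lt[OF i] .
  show "D i \<subseteq> {c \<in> D j. dep c \<le> dep i}" using D_sub[OF i j] dep_le[OF _ iln] by auto
  show "{c \<in> D j. dep c \<le> dep i} \<subseteq> D i"
  proof
    fix c assume c: "c \<in> {c \<in> D j. dep c \<le> dep i}"
    then have cD: "c \<in> D j" and cd: "dep c \<le> dep i" by auto
    have "R c j" "R i j" "c < n" using cD i unfolding D_def by auto
    then have "R c i \<or> R i c" using ch[OF \<open>c < n\<close> iln j] by simp
    then show "c \<in> D i"
    proof
      assume "R c i" then show ?thesis using \<open>c < n\<close> unfolding D_def by auto
    next
      assume "R i c"
      then have "i \<in> D c" using iln unfolding D_def by auto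
      have "i = c"
      proof (rule ccontr)
        assume "i \<noteq> c"
        from dep_lt[OF \<open>i \<in> D c\<close> \<open>c < n\<close> this] show False using cd by simp
      qed
      then show ?thesis using DinD iln by auto
    qed
  qed
qed

lemma anc_anc: assumes j: "j < n" and "k' \<le> k" "k \<le> dep j" shows "anc (anc j k) k' = anc j k'"
proof -
  have a1: "anc j k \<in> D j" "dep (anc j k) = k" using anc[OF j assms(3)] by auto
  have a2: "anc j k' \<in> D j" "dep (anc j k') = k'" using anc[OF j] assms by auto
  have "anc j k' \<in> D (anc j k)" using D_anc[OF j a1(1)] a1 a2 assms by auto
  from anc_eq[OF anc_lt[OF j assms(3)] this] show ?thesis unfolding a2(2) .
qed

lemma D_split: assumes j: "j < n" and k: "k \<le> dep j"
  shows "D j = {c \<in> D j. k < dep c} \<union> D (anc j k)" "{c \<in> D j. k < dep c} \<inter> D (anc j k) = {}"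
proof -
  have e: "D (anc j k) = {c \<in> D j. dep c \<le> k}" using D_anc[OF j anc(1)[OF j k]] anc(2)[OF j k] by simp
  show "D j = {c \<in> D j. k < dep c} \<union> D (anc j k)" unfolding e by auto
  show "{c \<in> D j. k < dep c} \<inter> D (anc j k) = {}" unfolding e by auto
qed

lemma card_split: assumes j: "j < n" and k: "k \<le> dep j"
  shows "card (D j \<inter> W) = card ({c \<in> D j. k < dep c} \<inter> W) + card (D (anc j k) \<inter> W)"
proof -
  have e: "D j \<inter> W = ({c \<in> D j. k < dep c} \<inter> W) \<union> (D (anc j k) \<inter> W)"
    using D_split[OF j k] by blast
  have "card (({c \<in> D j. k < dep c} \<inter> W) \<union> (D (anc j k) \<inter> W)) = 
     card ({c \<in> D j. k < dep c} \<inter> W) + card (D (anc j k) \<inter> W)"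
    by (rule card_Un_disjoint) (use finD D_split(2)[OF j k] in auto)
  then show ?thesis by (simp only: e[symmetric])
qed

lemma top_set: assumes j: "j < n" "0 < dep j" shows "{c \<in> D j. dep j - 1 < dep c} = {j}"
proof -
  have "\<And>c. c \<in> D j \<Longrightarrow> dep j - 1 < dep c \<Longrightarrow> c = j"
  proof -
    fix c assume c: "c \<in> D j" "dep j - 1 < dep c"
    then have "dep c = dep j" using dep_le[OF c(1) j(1)] by simp
    then show "c = j" using dep_inj[OF c(1) DinD[OF j(1)] j(1)] by simp
  qed
  then show ?thesis using DinD[OF j(1)] j(2) by auto
qed

lemma card_peel: assumes j: "j < n" "0 < dep j"
  shows "card (D j \<inter> W) = (if j \<in> W then 1 else 0) + card (D (anc j (dep j - 1)) \<inter> W)"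
  using card_split[OF j(1), of "dep j - 1" W] top_set[OF j] by auto

lemma D_root: assumes "j < n" "dep j = 0" shows "D j = {j}"
proof -
  have "\<And>c. c \<in> D j \<Longrightarrow> c = j"
  proof -
    fix c assume c: "c \<in> D j"
    then have "dep c = dep j" using dep_le[OF c assms(1)] assms(2) by simp
    then show "c = j" using dep_inj[OF c DinD[OF assms(1)] assms(1)] by simp
  qed
  then show ?thesis using DinD[OF assms(1)] by auto
qed

lemma G_mem: "x \<in> G w \<longleftrightarrow> x < n \<and> odd (card (D x \<inter> w))"
  unfolding G_def by simp

lemma G_lin: "vxor (G (vxor w s)) (G s) = G w"
proof (rule Set.set_eqI)
  fix x
  have "x \<in> vxor (G (vxor w s)) (G s) \<longleftrightarrow> (x \<in> G (vxor w s)) \<noteq> (x \<in> G s)" by (rule vxor_iff)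
  also have "\<dots> \<longleftrightarrow> x < n \<and> odd (card (D x \<inter> w))"
    unfolding G_mem odd_card_vxor[OF finD] by blast
  finally show "x \<in> vxor (G (vxor w s)) (G s) \<longleftrightarrow> x \<in> G w" unfolding G_mem .
qed

lemma div_step: "(if 2 ^ m dvd Suc e then 1 else 0) + (e div 2 ^ m + 1) = Suc e div 2 ^ m + (1::nat)"
  using div_Suc[of e "2 ^ m"] by (auto simp: dvd_eq_mod_eq_0)

lemma cnt_mult: "j < n \<Longrightarrow> card (D j \<inter> {c. 2 ^ m dvd dep c}) = dep j div 2 ^ m + 1"
proof (induction "dep j" arbitrary: j rule: less_induct)
  case less
  show ?case
  proof (cases "dep j = 0")
    case True
    have "D j \<inter> {c. 2 ^ m dvd dep c} = {j}" using D_root[OF less.prems True] True by auto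
    then show ?thesis using True by simp
  next
    case False
    let ?p = "anc j (dep j - 1)"
    have p: "?p < n" "dep ?p = dep j - 1" using anc_lt[OF less.prems] anc(2)[OF less.prems] by auto
    have pl: "dep ?p < dep j" using p False by simp
    obtain e where e: "dep j = Suc e" using False by (cases "dep j") auto
    have "card (D j \<inter> {c. 2 ^ m dvd dep c}) = (if j \<in> {c. 2 ^ m dvd dep c} then 1 else 0) + card (D ?p \<inter> {c. 2 ^ m dvd dep c})"
      by (rule card_peel[OF less.prems]) (use False in simp)
    also have "card (D ?p \<inter> {c. 2 ^ m dvd dep c}) = dep ?p div 2 ^ m + 1"
      by (rule less.hyps[OF pl p(1)])
    also have "(if j \<in> {c. 2 ^ m dvd dep c} then 1 else 0) + (dep ?p div 2 ^ m + 1) = dep j div 2 ^ m + 1"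
    proof -
      have "dep ?p = e" using p(2) e by simp
      then show ?thesis using div_step[of m e] e by simp
    qed
    finally show ?thesis .
  qed
qed

lemma depth_bit: "j < n \<Longrightarrow> (j \<in> G {a. a < n \<and> 2 ^ m dvd dep a}) \<longleftrightarrow> \<not> bit (dep j) m"
proof -
  assume j: "j < n"
  have "D j \<inter> {a. a < n \<and> 2 ^ m dvd dep a} = D j \<inter> {c. 2 ^ m dvd dep c}" using D_lt by auto
  then show ?thesis using cnt_mult[OF j, of m] j unfolding G_def by (simp add: bit_iff_odd)
qed

end
lemma arA: assumes "(K::nat) dvd Suc e" "K > 0" shows "K * (e div K) = Suc e - K" "K \<le> Suc e"
proof -
  have m: "Suc e mod K = 0" using assms by (simp add: dvd_eq_mod_eq_0)
  have d: "Suc e div K = Suc (e div K)" using div_Suc[of e K] m by simp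
  have "K * (Suc e div K) = Suc e" using assms by simp
  then show "K * (e div K) = Suc e - K" using d by simp
  show "K \<le> Suc e" using assms(1) by (simp add: dvd_imp_le)
qed

lemma arB: assumes "\<not> (K::nat) dvd Suc e" shows "e div K = Suc e div K" "K * (Suc e div K) \<le> e"
proof -
  have m: "Suc e mod K \<noteq> 0" using assms by (simp add: dvd_eq_mod_eq_0)
  show "e div K = Suc e div K" using div_Suc[of e K] m by simp
  have le: "K * (Suc e div K) \<le> Suc e" by (rule times_div_less_eq_dividend)
  have ne: "K * (Suc e div K) \<noteq> Suc e" using assms by (metis dvd_triv_left)
  show "K * (Suc e div K) \<le> e" using le ne by linarith
qed

lemma arC: assumes "(P::nat) > 0" "P dvd d" "\<not> 2 * P dvd d" shows "2 * P * (d div (2 * P)) = d - P" "P \<le> d"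
proof -
  obtain u where u: "d = P * u" using assms(2) by blast
  have ou: "odd u" using assms(3) u by auto
  then obtain t where t: "u = 2 * t + 1" by (metis oddE)
  have "d = 2 * P * t + P" using u t by (simp add: algebra_simps)
  moreover have "d div (2 * P) = t" using \<open>d = 2 * P * t + P\<close> assms(1) by simp
  ultimately show "2 * P * (d div (2 * P)) = d - P" by simp
  show "P \<le> d" using \<open>d = 2 * P * t + P\<close> by simp
qed

lemma arD: assumes "(P::nat) > 0" "2 * P dvd d" "2 * P \<le> d" "d - 2 * P < e" "e \<le> d" "P dvd e" "\<not> 2 * P dvd e"
  shows "e = d - P"
proof -
  obtain t where t: "d = 2 * P * t" using assms(2) by blast
  obtain u where u: "e = P * u" using assms(6) by blast
  have ou: "odd u" using assms(7) u by auto
  have t1: "t \<ge> 1" using assms(1,3) t by (cases t) auto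
  have "P * (2 * t - 2) < P * u" using assms(4) t u t1 by (simp add: algebra_simps diff_mult_distrib2)
  then have a: "2 * t - 2 < u" by simp
  have "P * u \<le> P * (2 * t)" using assms(5) t u by (simp add: algebra_simps)
  then have b: "u \<le> 2 * t" using assms(1) by simp
  have "u \<noteq> 2 * t" using ou by auto
  then have "u = 2 * t - 1" using a b t1 by linarith
  then show ?thesis using t u t1 by (simp add: algebra_simps diff_mult_distrib2)
qed

definition W1 :: "nat \<Rightarrow> (nat \<Rightarrow> nat) \<Rightarrow> nat \<Rightarrow> (nat \<Rightarrow> nat) \<Rightarrow> nat \<Rightarrow> nat set" where
  "W1 n df m ptr b = {c. c < n \<and> 2 ^ Suc m dvd df c \<and> bit (Suc c) b \<noteq> bit (ptr c) b}"

definition W2 :: "nat \<Rightarrow> (nat \<Rightarrow> nat) \<Rightarrow> nat \<Rightarrow> nat \<Rightarrow> nat set" where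
  "W2 n df m b = {c. c < n \<and> 2 ^ m dvd df c \<and> \<not> 2 ^ Suc m dvd df c \<and> bit (Suc c) b}"

lemma dec_false: "dec L (\<lambda>b. False) = 0" by (simp add: dec_def)

context cforest begin

definition pid where "pid h a = (if 2 ^ h \<le> dep a then Suc (anc a (dep a - 2 ^ h)) else 0)"

lemma tele:
  assumes ptr: "\<And>c. c < n \<Longrightarrow> 2 ^ Suc m dvd dep c \<Longrightarrow> ptr c = pid (Suc m) c"
  shows "x < n \<Longrightarrow> odd (card (D x \<inter> W1 n dep m ptr b)) \<longleftrightarrow> bit (Suc (anc x (2 ^ Suc m * (dep x div 2 ^ Suc m)))) b"
proof (induction "dep x" arbitrary: x rule: less_induct)
  case less
  let ?K = "2 ^ Suc m :: nat"
  let ?W = "W1 n dep m ptr b"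
  have Kp: "?K > 0" by simp
  show ?case
  proof (cases "dep x = 0")
    case True
    have px: "ptr x = 0" using ptr[OF less.prems] True by (simp add: pid_def)
    have xw: "x \<in> ?W \<longleftrightarrow> bit (Suc x) b" using less.prems True px by (simp add: W1_def)
    have "D x \<inter> ?W = (if bit (Suc x) b then {x} else {})" using D_root[OF less.prems True] xw by auto
    moreover have "anc x (?K * (dep x div ?K)) = x" using anc_top[OF less.prems] True by simp
    ultimately show ?thesis by (cases "bit (Suc x) b") simp_all
  next
    case False
    obtain e where e: "dep x = Suc e" using False by (cases "dep x") auto
    let ?p = "anc x (dep x - 1)"
    have p: "?p < n" "dep ?p = e" using anc_lt[OF less.prems] anc(2)[OF less.prems] e by auto
    have pl: "dep ?p < dep x" using p e by simp
    have peel: "card (D x \<inter> ?W) = (if x \<in> ?W then 1 else 0) + card (D ?p \<inter> ?W)"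
      by (rule card_peel[OF less.prems]) (use False in simp)
    have IH: "odd (card (D ?p \<inter> ?W)) \<longleftrightarrow> bit (Suc (anc ?p (?K * (e div ?K)))) b"
      using less.hyps[OF pl p(1)] p(2) by simp
    show ?thesis
    proof (cases "?K dvd dep x")
      case True
      have a: "?K * (e div ?K) = Suc e - ?K" "?K \<le> Suc e" using arA[of ?K e] True e by auto
      have aa: "anc ?p (?K * (e div ?K)) = anc x (dep x - ?K)"
        using anc_anc[OF less.prems, of "?K * (e div ?K)" "dep x - 1"] a e by simp
      have t: "?K * (dep x div ?K) = dep x" using True by simp
      have xin: "x \<in> ?W \<longleftrightarrow> bit (Suc x) b \<noteq> bit (Suc (anc x (dep x - ?K))) b"
        using ptr[OF less.prems True] less.prems True a e by (simp add: W1_def pid_def)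
      have oc: "odd (card (D ?p \<inter> ?W)) \<longleftrightarrow> bit (Suc (anc x (dep x - ?K))) b" using IH unfolding aa .
      show ?thesis unfolding t anc_top[OF less.prems] peel using oc xin by (cases "x \<in> ?W") simp_all
    next
      case False
      have b: "e div ?K = Suc e div ?K" "?K * (Suc e div ?K) \<le> e" using arB[of ?K e] False e by auto
      have aa: "anc ?p (?K * (e div ?K)) = anc x (?K * (dep x div ?K))"
        using anc_anc[OF less.prems, of "?K * (e div ?K)" "dep x - 1"] b e by simp
      have xin: "x \<notin> ?W" using False by (simp add: W1_def)
      have oc: "odd (card (D ?p \<inter> ?W)) \<longleftrightarrow> bit (Suc (anc x (?K * (dep x div ?K)))) b" using IH unfolding aa .
      show ?thesis unfolding peel using oc xin by simp
    qed
  qed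
qed

lemma w2_root: assumes "x < n" "dep x = 0" shows "D x \<inter> W2 n dep m b = {}"
proof -
  have "D x = {x}" by (rule D_root[OF assms])
  moreover have "x \<notin> W2 n dep m b" using assms(2) by (simp add: W2_def)
  ultimately show ?thesis by simp
qed

lemma w2split:
  assumes x: "x < n" and K: "2 ^ Suc m dvd dep x" and pos: "0 < dep x"
  shows "odd (card (D x \<inter> W2 n dep m b)) \<longleftrightarrow>
    (bit (Suc (anc x (dep x - 2 ^ m))) b \<noteq> odd (card (D (anc x (dep x - 2 ^ Suc m)) \<inter> W2 n dep m b)))"
proof -
  define P :: nat where "P = 2 ^ m"
  have KP: "2 ^ Suc m = 2 * P" by (simp add: P_def)
  have Pp: "0 < P" by (simp add: P_def)
  let ?W = "W2 n dep m b"
  define u where "u = anc x (dep x - P)"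
  have K2: "2 * P dvd dep x" using K unfolding KP .
  have Kle: "2 * P \<le> dep x" using K2 pos by (simp add: dvd_imp_le)
  have u: "u \<in> D x" "dep u = dep x - P" "u < n"
    using anc[OF x, of "dep x - P"] anc_lt[OF x, of "dep x - P"] unfolding u_def by auto
  have PK: "P dvd 2 * P" by simp
  have Px: "P dvd dep x" by (rule dvd_trans[OF PK K2])
  have uP: "P dvd dep u" unfolding u(2) by (rule dvd_diff_nat[OF Px]) simp
  have uK: "\<not> 2 * P dvd dep u"
  proof
    assume h: "2 * P dvd dep u"
    have "2 * P dvd dep x - dep u" by (rule dvd_diff_nat[OF K2 h])
    moreover have "dep x - dep u = P" using Kle u(2) by simp
    ultimately have "2 * P dvd P" by simp
    then show False using Pp by (simp add: dvd_imp_le)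
  qed
  have uW: "u \<in> ?W \<longleftrightarrow> bit (Suc u) b" using u(3) uP uK unfolding W2_def P_def by simp
  have rule: "\<And>c. c \<in> D x \<Longrightarrow> dep x - 2 * P < dep c \<Longrightarrow> c \<in> ?W \<Longrightarrow> c = u"
  proof -
    fix c assume c: "c \<in> D x" "dep x - 2 * P < dep c" "c \<in> ?W"
    have cP: "P dvd dep c" and cK: "\<not> 2 * P dvd dep c" using c(3) unfolding W2_def P_def by auto
    have "dep c = dep x - P" by (rule arD[OF Pp K2 Kle c(2) dep_le[OF c(1) x] cP cK])
    then show "c = u" using dep_inj[OF c(1) u(1) x] u(2) by simp
  qed
  have "dep x - 2 * P < dep x - P" using Kle Pp by arith
  then have ud: "dep x - 2 * P < dep u" using u(2) by simp
  have S1: "{c \<in> D x. dep x - 2 * P < dep c} \<inter> ?W \<subseteq> {u}"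
  proof
    fix c assume "c \<in> {c \<in> D x. dep x - 2 * P < dep c} \<inter> ?W"
    then have "c \<in> D x" "dep x - 2 * P < dep c" "c \<in> ?W" by auto
    from rule[OF this] show "c \<in> {u}" by simp
  qed
  have S: "{c \<in> D x. dep x - 2 * P < dep c} \<inter> ?W = (if bit (Suc u) b then {u} else {})"
  proof (cases "bit (Suc u) b")
    case True
    then have "u \<in> ?W" using uW by simp
    then have "u \<in> {c \<in> D x. dep x - 2 * P < dep c} \<inter> ?W" using ud u(1) by simp
    then show ?thesis using True S1 by auto
  next
    case False
    then have "u \<notin> ?W" using uW by simp
    then show ?thesis using False S1 by auto
  qed
  have "card (D x \<inter> ?W) = card ({c \<in> D x. dep x - 2 * P < dep c} \<inter> ?W) + card (D (anc x (dep x - 2 * P)) \<inter> ?W)"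
    by (rule card_split[OF x]) (use Kle in simp)
  then have "odd (card (D x \<inter> ?W)) \<longleftrightarrow> (bit (Suc u) b \<noteq> odd (card (D (anc x (dep x - 2 * P)) \<inter> ?W)))"
    unfolding S by (cases "bit (Suc u) b") simp_all
  then show ?thesis by (simp add: u_def P_def)
qed

lemma upd_correct:
  assumes ptr: "\<And>c. c < n \<Longrightarrow> 2 ^ Suc m dvd dep c \<Longrightarrow> ptr c = pid (Suc m) c"
    and L: "n < 2 ^ L" and a: "a < n" and am: "2 ^ m dvd dep a"
  shows "(if \<not> 2 ^ Suc m dvd dep a then dec L (\<lambda>b. a \<in> G (W1 n dep m ptr b))
          else dec L (\<lambda>b. (a \<in> G (W2 n dep m b)) \<noteq> (ptr a \<noteq> 0 \<and> ptr a - 1 \<in> G (W2 n dep m b)))) = pid m a"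
proof (cases "2 ^ Suc m dvd dep a")
  case False
  have c: "2 * 2 ^ m * (dep a div (2 * 2 ^ m)) = dep a - 2 ^ m" "2 ^ m \<le> dep a"
    using arC[of "2 ^ m" "dep a"] am False by auto
  have "\<And>b. a \<in> G (W1 n dep m ptr b) \<longleftrightarrow> bit (Suc (anc a (dep a - 2 ^ m))) b"
  proof -
    fix b
    have "a \<in> G (W1 n dep m ptr b) \<longleftrightarrow> odd (card (D a \<inter> W1 n dep m ptr b))" using a by (simp add: G_mem)
    also have "\<dots> \<longleftrightarrow> bit (Suc (anc a (2 ^ Suc m * (dep a div 2 ^ Suc m)))) b" by (rule tele[OF ptr a])
    also have "2 ^ Suc m * (dep a div 2 ^ Suc m) = dep a - 2 ^ m" using c(1) by simp
    finally show "a \<in> G (W1 n dep m ptr b) \<longleftrightarrow> bit (Suc (anc a (dep a - 2 ^ m))) b" .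
  qed
  moreover have "Suc (anc a (dep a - 2 ^ m)) < 2 ^ L" using anc_lt[OF a, of "dep a - 2 ^ m"] L by simp
  ultimately show ?thesis using False c by (simp add: dec_bit pid_def)
next
  case True
  show ?thesis
  proof (cases "dep a = 0")
    case True
    have "\<And>b. a \<notin> G (W2 n dep m b)" using w2_root[OF a True] by (simp add: G_mem)
    moreover have "ptr a = 0" using ptr[OF a] \<open>2 ^ Suc m dvd dep a\<close> True by (simp add: pid_def)
    ultimately show ?thesis using True by (simp add: dec_false pid_def)
  next
    case False
    let ?y = "anc a (dep a - 2 ^ Suc m)"
    have Kle: "2 ^ Suc m \<le> dep a" using \<open>2 ^ Suc m dvd dep a\<close> False by (simp add: dvd_imp_le)
    have y: "?y < n" using anc_lt[OF a] by simp
    have pa: "ptr a = Suc ?y" using ptr[OF a \<open>2 ^ Suc m dvd dep a\<close>] Kle by (simp add: pid_def)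
    have "\<And>b. ((a \<in> G (W2 n dep m b)) \<noteq> (ptr a \<noteq> 0 \<and> ptr a - 1 \<in> G (W2 n dep m b)))
        \<longleftrightarrow> bit (Suc (anc a (dep a - 2 ^ m))) b"
    proof -
      fix b
      have ws: "odd (card (D a \<inter> W2 n dep m b)) \<longleftrightarrow>
        (bit (Suc (anc a (dep a - 2 ^ m))) b \<noteq> odd (card (D ?y \<inter> W2 n dep m b)))"
        using w2split[OF a \<open>2 ^ Suc m dvd dep a\<close>] False by simp
      have e1: "a \<in> G (W2 n dep m b) \<longleftrightarrow> odd (card (D a \<inter> W2 n dep m b))" using a by (simp add: G_mem)
      have e2: "(ptr a \<noteq> 0 \<and> ptr a - 1 \<in> G (W2 n dep m b)) \<longleftrightarrow> odd (card (D ?y \<inter> W2 n dep m b))"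
        using pa y by (simp add: G_mem)
      show "((a \<in> G (W2 n dep m b)) \<noteq> (ptr a \<noteq> 0 \<and> ptr a - 1 \<in> G (W2 n dep m b)))
        \<longleftrightarrow> bit (Suc (anc a (dep a - 2 ^ m))) b" unfolding e1 e2 ws by blast
    qed
    moreover have "Suc (anc a (dep a - 2 ^ m)) < 2 ^ L" using anc_lt[OF a, of "dep a - 2 ^ m"] L by simp
    moreover have "2 ^ m \<le> dep a"
    proof -
      have "(2::nat) ^ m \<le> 2 ^ Suc m" by simp
      then show ?thesis using Kle by linarith
    qed
    ultimately show ?thesis using \<open>2 ^ Suc m dvd dep a\<close> by (simp add: dec_bit pid_def)
  qed
qed

end

fun askl :: "nat set list \<Rightarrow> (nat set list \<Rightarrow> qalg) \<Rightarrow> qalg" where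
  "askl [] k = k []"
| "askl (v # vs) k = Query v (\<lambda>a. askl vs (\<lambda>as. k (a # as)))"

lemma askl_run: "run_result (askl vs k) out = run_result (k (map out vs)) out"
  "run_queries (askl vs k) out = length vs + run_queries (k (map out vs)) out"
  by (induction vs arbitrary: k) auto

fun dphase :: "nat \<Rightarrow> nat set \<Rightarrow> nat \<Rightarrow> nat \<Rightarrow> (nat \<Rightarrow> nat) \<Rightarrow> ((nat \<Rightarrow> nat) \<Rightarrow> qalg) \<Rightarrow> qalg" where
  "dphase n t 0 m dm k = k dm"
| "dphase n t (Suc r) m dm k = Query {a. a < n \<and> dm a = 0}
     (\<lambda>ans. dphase n t r (Suc m) (\<lambda>j. dm j + (if j \<in> vxor ans t then 0 else 2 ^ m)) k)"

definition pquery :: "nat \<Rightarrow> nat \<Rightarrow> nat \<Rightarrow> (nat \<Rightarrow> nat) \<Rightarrow> (nat \<Rightarrow> nat) \<Rightarrow> nat set list" where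
  "pquery n L m dm ptr = map (W1 n dm m ptr) [0..<L] @ map (W2 n dm m) [0..<L]"

definition pupd :: "nat \<Rightarrow> nat \<Rightarrow> (nat \<Rightarrow> nat) \<Rightarrow> (nat \<Rightarrow> nat) \<Rightarrow> nat set \<Rightarrow> nat set list \<Rightarrow> nat \<Rightarrow> nat" where
  "pupd L m dm ptr t ans = (\<lambda>a. if \<not> 2 ^ Suc m dvd dm a then dec L (\<lambda>b. a \<in> vxor (ans ! b) t)
     else dec L (\<lambda>b. (a \<in> vxor (ans ! (L + b)) t) \<noteq> (ptr a \<noteq> 0 \<and> ptr a - 1 \<in> vxor (ans ! (L + b)) t)))"

fun pphase :: "nat \<Rightarrow> nat set \<Rightarrow> nat \<Rightarrow> (nat \<Rightarrow> nat) \<Rightarrow> nat \<Rightarrow> (nat \<Rightarrow> nat) \<Rightarrow> ((nat \<Rightarrow> nat) \<Rightarrow> qalg) \<Rightarrow> qalg" where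
  "pphase n t L dm 0 ptr k = k ptr"
| "pphase n t L dm (Suc r) ptr k =
     askl (pquery n L r dm ptr) (\<lambda>ans. pphase n t L dm r (pupd L r dm ptr t ans) k)"

definition Lf :: "nat \<Rightarrow> nat" where "Lf n = (LEAST L. n < 2 ^ L)"

lemma Lf_gt: "n < 2 ^ Lf n"
  unfolding Lf_def by (rule LeastI[of _ n]) simp

lemma Lf_le: "0 < Lf n \<Longrightarrow> 2 ^ (Lf n - 1) \<le> n"
proof -
  assume "0 < Lf n"
  then have "Lf n - 1 < Lf n" by simp
  then have "\<not> n < 2 ^ (Lf n - 1)" unfolding Lf_def by (rule not_less_Least)
  then show ?thesis by simp
qed

definition alg :: "nat \<Rightarrow> qalg" where
  "alg n = Query {} (\<lambda>t. dphase n t (Lf n) 0 (\<lambda>_. 0)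
     (\<lambda>dm. pphase n t (Lf n) dm (Lf n) (\<lambda>_. 0)
       (\<lambda>ptr. Answer {j. j < n \<and> ((j \<in> t) \<noteq> (ptr j \<noteq> 0 \<and> ptr j - 1 \<in> t))})))"

locale cuso = cforest +
  fixes s :: "nat set" and out :: "nat set \<Rightarrow> nat set"
  assumes s_sub: "s \<subseteq> {..<n}" and out_eq: "\<And>v. v \<subseteq> {..<n} \<Longrightarrow> out v = G (vxor v s)"
begin

lemma t_eq: "out {} = G s"
proof -
  have "vxor {} s = s" by (auto simp: vxor_def)
  then show ?thesis using out_eq[of "{}"] by simp
qed

lemma ansG: "w \<subseteq> {..<n} \<Longrightarrow> vxor (out w) (out {}) = G w"
  using out_eq[of w] t_eq G_lin by simp

lemma dphase_run:
  "(\<forall>j<n. dm j = dep j mod 2 ^ m) \<Longrightarrow> \<exists>dm'. (\<forall>j<n. dm' j = dep j mod 2 ^ (m + r)) \<and>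
     run_result (dphase n (out {}) r m dm k) out = run_result (k dm') out \<and>
     run_queries (dphase n (out {}) r m dm k) out = r + run_queries (k dm') out"
proof (induction r arbitrary: m dm)
  case 0
  then show ?case by (intro exI[of _ dm]) simp
next
  case (Suc r)
  let ?Q = "{a. a < n \<and> dm a = 0}"
  have Qe: "?Q = {a. a < n \<and> 2 ^ m dvd dep a}" using Suc.prems by (auto simp: dvd_eq_mod_eq_0)
  have QG: "vxor (out ?Q) (out {}) = G {a. a < n \<and> 2 ^ m dvd dep a}"
    using ansG[of ?Q] Qe by auto
  define dm2 where "dm2 = (\<lambda>j. dm j + (if j \<in> vxor (out ?Q) (out {}) then 0 else 2 ^ m))"
  have dm2: "\<forall>j<n. dm2 j = dep j mod 2 ^ Suc m"
  proof (intro allI impI)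
    fix j assume j: "j < n"
    have "j \<in> vxor (out ?Q) (out {}) \<longleftrightarrow> \<not> bit (dep j) m" unfolding QG by (rule depth_bit[OF j])
    then show "dm2 j = dep j mod 2 ^ Suc m" unfolding dm2_def using Suc.prems j mod_pow_Suc[of "dep j" m] by simp
  qed
  obtain dm' where dm': "\<forall>j<n. dm' j = dep j mod 2 ^ (Suc m + r)"
    "run_result (dphase n (out {}) r (Suc m) dm2 k) out = run_result (k dm') out"
    "run_queries (dphase n (out {}) r (Suc m) dm2 k) out = r + run_queries (k dm') out"
    using Suc.IH[OF dm2] by blast
  have rr: "run_result (dphase n (out {}) (Suc r) m dm k) out = run_result (dphase n (out {}) r (Suc m) dm2 k) out"
    unfolding dm2_def by simp
  have rq: "run_queries (dphase n (out {}) (Suc r) m dm k) out = Suc (run_queries (dphase n (out {}) r (Suc m) dm2 k) out)"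
    unfolding dm2_def by simp
  have d1: "\<forall>j<n. dm' j = dep j mod 2 ^ (m + Suc r)" using dm'(1) by simp
  show ?case
  proof (intro exI[of _ dm'] conjI)
    show "\<forall>j<n. dm' j = dep j mod 2 ^ (m + Suc r)" by (rule d1)
    show "run_result (dphase n (out {}) (Suc r) m dm k) out = run_result (k dm') out" unfolding rr dm'(2) ..
    show "run_queries (dphase n (out {}) (Suc r) m dm k) out = Suc r + run_queries (k dm') out"
      unfolding rq dm'(3) by simp
  qed
qed

lemma pphase_run:
  assumes L: "n < 2 ^ L" and dm: "\<forall>j<n. dm j = dep j"
  shows "(\<forall>a<n. 2 ^ r dvd dep a \<longrightarrow> ptr a = pid r a) \<Longrightarrow> \<exists>ptr'. (\<forall>a<n. ptr' a = pid 0 a) \<and>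
     run_result (pphase n (out {}) L dm r ptr k) out = run_result (k ptr') out \<and>
     run_queries (pphase n (out {}) L dm r ptr k) out = r * (2 * L) + run_queries (k ptr') out"
proof (induction r arbitrary: ptr)
  case 0
  then show ?case by (intro exI[of _ ptr]) simp
next
  case (Suc r)
  let ?ans = "map out (pquery n L r dm ptr)"
  have W1e: "\<And>b. W1 n dm r ptr b = W1 n dep r ptr b" using dm by (auto simp: W1_def)
  have W2e: "\<And>b. W2 n dm r b = W2 n dep r b" using dm by (auto simp: W2_def)
  have n1: "\<And>b. b < L \<Longrightarrow> ?ans ! b = out (W1 n dep r ptr b)" using W1e by (simp add: pquery_def nth_append)
  have n2: "\<And>b. b < L \<Longrightarrow> ?ans ! (L + b) = out (W2 n dep r b)" using W2e by (simp add: pquery_def nth_append)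
  have s1: "\<And>b. W1 n dep r ptr b \<subseteq> {..<n}" by (auto simp: W1_def)
  have s2: "\<And>b. W2 n dep r b \<subseteq> {..<n}" by (auto simp: W2_def)
  have a1: "\<And>b. b < L \<Longrightarrow> vxor (?ans ! b) (out {}) = G (W1 n dep r ptr b)"
    using n1 ansG[OF s1] by simp
  have a2: "\<And>b. b < L \<Longrightarrow> vxor (?ans ! (L + b)) (out {}) = G (W2 n dep r b)"
    using n2 ansG[OF s2] by simp
  define ptr2 where "ptr2 = pupd L r dm ptr (out {}) ?ans"
  have ptr2: "\<forall>a<n. 2 ^ r dvd dep a \<longrightarrow> ptr2 a = pid r a"
  proof (intro allI impI)
    fix a assume a: "a < n" "2 ^ r dvd dep a"
    have hyp: "\<And>c. c < n \<Longrightarrow> 2 ^ Suc r dvd dep c \<Longrightarrow> ptr c = pid (Suc r) c" using Suc.prems by blast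
    have "ptr2 a = (if \<not> 2 ^ Suc r dvd dep a then dec L (\<lambda>b. a \<in> G (W1 n dep r ptr b))
          else dec L (\<lambda>b. (a \<in> G (W2 n dep r b)) \<noteq> (ptr a \<noteq> 0 \<and> ptr a - 1 \<in> G (W2 n dep r b))))"
    proof (cases "2 ^ Suc r dvd dep a")
      case True
      then show ?thesis unfolding ptr2_def pupd_def using dm a(1) a2 by (auto intro!: dec_cong)
    next
      case False
      then show ?thesis unfolding ptr2_def pupd_def using dm a(1) a1 by (auto intro!: dec_cong)
    qed
    also have "\<dots> = pid r a" by (rule upd_correct[OF hyp L a])
    finally show "ptr2 a = pid r a" .
  qed
  obtain ptr' where p': "\<forall>a<n. ptr' a = pid 0 a"
    "run_result (pphase n (out {}) L dm r ptr2 k) out = run_result (k ptr') out"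
    "run_queries (pphase n (out {}) L dm r ptr2 k) out = r * (2 * L) + run_queries (k ptr') out"
    using Suc.IH[OF ptr2] by blast
  have len: "length (pquery n L r dm ptr) = 2 * L" by (simp add: pquery_def)
  show ?case
    by (intro exI[of _ ptr']) (use p' len in \<open>simp add: askl_run ptr2_def\<close>)
qed

lemma final_s:
  assumes p: "\<forall>j<n. ptr j = pid 0 j"
  shows "{j. j < n \<and> ((j \<in> G s) \<noteq> (ptr j \<noteq> 0 \<and> ptr j - 1 \<in> G s))} = s"
proof (rule Set.set_eqI)
  fix j
  show "j \<in> {j. j < n \<and> ((j \<in> G s) \<noteq> (ptr j \<noteq> 0 \<and> ptr j - 1 \<in> G s))} \<longleftrightarrow> j \<in> s"
  proof (cases "j < n")
    case False then show ?thesis using s_sub by auto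
  next
    case j: True
    show ?thesis
    proof (cases "dep j = 0")
      case True
      have "ptr j = 0" using p j True by (simp add: pid_def)
      moreover have "j \<in> G s \<longleftrightarrow> j \<in> s"
      proof -
        have "j \<in> G s \<longleftrightarrow> odd (card (D j \<inter> s))" using j by (simp add: G_mem)
        then show ?thesis unfolding D_root[OF j True] by (cases "j \<in> s") simp_all
      qed
      ultimately show ?thesis using j by simp
    next
      case False
      let ?p = "anc j (dep j - 1)"
      have pp: "ptr j = Suc ?p" using p j False by (simp add: pid_def)
      have pl: "?p < n" using anc_lt[OF j] by simp
      have "card (D j \<inter> s) = (if j \<in> s then 1 else 0) + card (D ?p \<inter> s)"
        by (rule card_peel[OF j]) (use False in simp)
      then have "j \<in> G s \<longleftrightarrow> ((j \<in> s) \<noteq> (?p \<in> G s))" using j pl by (simp add: G_mem)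
      then show ?thesis using j pp by auto
    qed
  qed
qed

lemma alg_run: "run_result (alg n) out = s \<and> run_queries (alg n) out = 1 + Lf n + Lf n * (2 * Lf n)"
proof -
  let ?L = "Lf n"
  let ?t = "out {}"
  let ?fin = "\<lambda>ptr. Answer {j. j < n \<and> ((j \<in> ?t) \<noteq> (ptr j \<noteq> 0 \<and> ptr j - 1 \<in> ?t))}"
  have L: "n < 2 ^ ?L" by (rule Lf_gt)
  obtain dm where dm: "\<forall>j<n. dm j = dep j mod 2 ^ (0 + ?L)"
    "run_result (dphase n ?t ?L 0 (\<lambda>_. 0) (\<lambda>dm. pphase n ?t ?L dm ?L (\<lambda>_. 0) ?fin)) out
      = run_result (pphase n ?t ?L dm ?L (\<lambda>_. 0) ?fin) out"
    "run_queries (dphase n ?t ?L 0 (\<lambda>_. 0) (\<lambda>dm. pphase n ?t ?L dm ?L (\<lambda>_. 0) ?fin)) out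
      = ?L + run_queries (pphase n ?t ?L dm ?L (\<lambda>_. 0) ?fin) out"
    using dphase_run[of "\<lambda>_. 0" 0 ?L "\<lambda>dm. pphase n ?t ?L dm ?L (\<lambda>_. 0) ?fin"] by simp blast
  have dme: "\<forall>j<n. dm j = dep j"
  proof (intro allI impI)
    fix j assume j: "j < n"
    have "dep j < 2 ^ ?L" using dep_lt_n[OF j] L by simp
    then show "dm j = dep j" using dm(1) j by simp
  qed
  have init: "\<forall>a<n. 2 ^ ?L dvd dep a \<longrightarrow> (0::nat) = pid ?L a"
  proof (intro allI impI)
    fix a assume a: "a < n" "2 ^ ?L dvd dep a"
    have "dep a < 2 ^ ?L" using dep_lt_n[OF a(1)] L by simp
    then have "dep a = 0" using a(2) by (metis dvd_imp_le not_le neq0_conv)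
    then show "(0::nat) = pid ?L a" by (simp add: pid_def)
  qed
  obtain ptr where p: "\<forall>a<n. ptr a = pid 0 a"
    "run_result (pphase n ?t ?L dm ?L (\<lambda>_. 0) ?fin) out = run_result (?fin ptr) out"
    "run_queries (pphase n ?t ?L dm ?L (\<lambda>_. 0) ?fin) out = ?L * (2 * ?L) + run_queries (?fin ptr) out"
    using pphase_run[OF L dme, of ?L "\<lambda>_. 0" ?fin] init by blast
  have "run_result (alg n) out = {j. j < n \<and> ((j \<in> ?t) \<noteq> (ptr j \<noteq> 0 \<and> ptr j - 1 \<in> ?t))}"
    unfolding alg_def using dm(2) p(2) by simp
  also have "\<dots> = s" unfolding t_eq by (rule final_s[OF p(1)])
  finally have r: "run_result (alg n) out = s" .
  have q: "run_queries (alg n) out = 1 + ?L + ?L * (2 * ?L)"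
    unfolding alg_def using dm(3) p(3) by simp
  show ?thesis using r q by simp
qed

end

lemma uso_structure:
  assumes mu: "matousek_uso n out" and re: "realizable n out"
  shows "\<exists>R s. cuso n R s out"
proof -
  obtain \<sigma> A s where h1: "\<sigma> permutes {..<n} \<and> upper_triangular_gf2 n A \<and>
      gf2_invertible n A \<and> s \<subseteq> {..<n} \<and>
      (\<forall>v. v \<subseteq> {..<n} \<longrightarrow> out v = gf2_matvec n (\<lambda>j i. A (\<sigma> j) (\<sigma> i)) (vxor v s))"
    using mu unfolding matousek_uso_def by (elim exE) (rule that)
  have s: "s \<subseteq> {..<n}" using h1 by (elim conjE)
  have oe: "\<And>v. v \<subseteq> {..<n} \<Longrightarrow> out v = gf2_matvec n (\<lambda>j i. A (\<sigma> j) (\<sigma> i)) (vxor v s)"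
    using h1 by (elim conjE) simp
  obtain Mr q where h2: "P_matrix n Mr \<and> q \<in> carrier_vec n \<and> nondegenerate_lcp n Mr q \<and>
      (\<forall>v. v \<subseteq> {..<n} \<longrightarrow> out v = sw_outmap n Mr q v)"
    using re unfolding realizable_def by (elim exE) (rule that)
  note P = conjunct1[OF h2]
  note q = conjunct1[OF conjunct2[OF h2]]
  note nd = conjunct1[OF conjunct2[OF conjunct2[OF h2]]]
  have oq: "\<And>v. v \<subseteq> {..<n} \<Longrightarrow> out v = sw_outmap n Mr q v"
    using h2 by (elim conjE) simp
  define R where "R i j = A (\<sigma> j) (\<sigma> i)" for i j
  have mem: "\<And>v r. v \<subseteq> {..<n} \<Longrightarrow> r < n \<Longrightarrow> r \<in> out v \<longleftrightarrow> odd (card ({i. i < n \<and> R i r} \<inter> vxor v s))"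
  proof -
    fix v r assume v: "v \<subseteq> {..<n}" and r: "r < n"
    have "{i. i < n \<and> A (\<sigma> r) (\<sigma> i) \<and> i \<in> vxor v s} = {i. i < n \<and> R i r} \<inter> vxor v s"
      by (auto simp: R_def)
    then show "r \<in> out v \<longleftrightarrow> odd (card ({i. i < n \<and> R i r} \<inter> vxor v s))"
      using oe[OF v] r by (simp add: gf2_matvec_def)
  qed
  have fin: "\<And>r. finite {i. i < n \<and> R i r}" by auto
  have H: "\<And>v r. v \<subseteq> {..<n} \<Longrightarrow> r < n \<Longrightarrow>
        (sw_sol n Mr q v $ r < 0) \<longleftrightarrow> (odd (card ({i. i < n \<and> R i r} \<inter> v)) \<noteq> (q $ r < 0))"
  proof -
    fix v r assume v: "v \<subseteq> {..<n}" and r: "r < n"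
    have "(sw_sol n Mr q v $ r < 0) \<longleftrightarrow> r \<in> out v" using oq[OF v] r by (simp add: sw_outmap_def)
    also have "\<dots> \<longleftrightarrow> odd (card ({i. i < n \<and> R i r} \<inter> v)) \<noteq> odd (card ({i. i < n \<and> R i r} \<inter> s))"
      using mem[OF v r] odd_card_vxor[OF fin] by simp
    also have "odd (card ({i. i < n \<and> R i r} \<inter> s)) \<longleftrightarrow> q $ r < 0"
    proof -
      have e: "vxor {} s = s" by (auto simp: vxor_def)
      have "q $ r < 0 \<longleftrightarrow> r \<in> out {}" using oq[of "{}"] r sol_empty[OF q, of Mr] by (simp add: sw_outmap_def)
      also have "\<dots> \<longleftrightarrow> odd (card ({i. i < n \<and> R i r} \<inter> s))" using mem[of "{}" r] r e by simp
      finally show ?thesis by simp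
    qed
    finally show "(sw_sol n Mr q v $ r < 0) \<longleftrightarrow> (odd (card ({i. i < n \<and> R i r} \<inter> v)) \<noteq> (q $ r < 0))" .
  qed
  note st = lcp_struct[OF P q nd H]
  interpret cf: cforest n R
  proof
    fix a assume "a < n" then show "R a a" using st(1) by blast
  next
    fix a b assume "a < n" "b < n" "R a b" "R b a" then show "a = b" using st(2) by blast
  next
    fix i j k assume "i < n" "j < n" "k < n" "R i j" "R j k" then show "R i k" using st(3) by blast
  next
    fix i j k assume "i < n" "j < n" "k < n" "R i k" "R j k" then show "R i j \<or> R j i" using st(4) by blast
  qed
  have "cuso n R s out"
  proof (unfold_locales)
    show "s \<subseteq> {..<n}" by (rule s)
    fix v :: "nat set" assume v: "v \<subseteq> {..<n}"
    show "out v = cf.G (vxor v s)"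
    proof (rule Set.set_eqI)
      fix r
      have dd: "cf.D r = {i. i < n \<and> R i r}" by (simp add: cf.D_def)
      show "r \<in> out v \<longleftrightarrow> r \<in> cf.G (vxor v s)"
      proof (cases "r < n")
        case True
        then show ?thesis using mem[OF v True] unfolding cf.G_mem dd by simp
      next
        case False
        have "r \<notin> out v" using oq[OF v] False by (simp add: sw_outmap_def)
        then show ?thesis using False unfolding cf.G_mem by simp
      qed
    qed
  qed
  then show ?thesis by blast
qed

lemma bound:
  assumes n: "n \<ge> 2"
  shows "real (1 + Lf n + Lf n * (2 * Lf n)) \<le> 16 / (ln 2)^2 * (ln (real n))\<^sup>2"
proof -
  define L where "L = Lf n"
  have Lp: "0 < L"
  proof (rule ccontr)
    assume "\<not> 0 < L" then have "L = 0" by simp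
    then show False using Lf_gt[of n] n unfolding L_def by simp
  qed
  have le: "2 ^ (L - 1) \<le> n" unfolding L_def by (rule Lf_le[OF Lp[unfolded L_def]])
  have l2: "ln (2::real) > 0" by simp
  have lnn: "ln (real n) \<ge> ln 2" using n by simp
  have le': "(2::real) ^ (L - 1) \<le> real n"
  proof -
    have "real (2 ^ (L - 1)) \<le> real n" using le by (rule of_nat_mono)
    then show ?thesis by simp
  qed
  have "ln ((2::real) ^ (L - 1)) \<le> ln (real n)" using le' n by (subst ln_le_cancel_iff) auto
  then have "real (L - 1) * ln 2 \<le> ln (real n)" by (simp add: ln_realpow)
  then have a: "real (L - 1) \<le> ln (real n) / ln 2" using l2 by (simp add: le_divide_eq)
  have a': "real L - 1 \<le> ln (real n) / ln 2" using a Lp by (simp add: of_nat_diff)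
  have b: "1 \<le> ln (real n) / ln 2" using lnn l2 by simp
  have c: "real L \<le> 2 * (ln (real n) / ln 2)" using a' b by linarith
  have h1: "1 * 1 \<le> L * L" by (rule mult_le_mono) (use Lp in auto)
  have h2: "L * 1 \<le> L * L" by (rule mult_le_mono) (use Lp in auto)
  have h3: "L * (2 * L) = 2 * (L * L)" by simp
  have "1 + L + L * (2 * L) \<le> 4 * (L * L)" using h1 h2 h3 by linarith
  then have "real (1 + L + L * (2 * L)) \<le> real (4 * (L * L))" by (rule of_nat_mono)
  then have d: "real (1 + L + L * (2 * L)) \<le> 4 * (real L)^2" by (simp add: power2_eq_square)
  have e: "(real L)^2 \<le> (2 * (ln (real n) / ln 2))^2" by (rule power_mono[OF c]) simp
  have "4 * (2 * (ln (real n) / ln 2))^2 = 16 / (ln 2)^2 * (ln (real n))\<^sup>2"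
    by (simp add: power_divide power_mult_distrib)
  then show ?thesis using d e unfolding L_def by linarith
qed


theorem theorem2:
  shows "\<exists>alg :: nat \<Rightarrow> qalg.
     (\<forall>n out. matousek_uso n out \<and> realizable n out \<longrightarrow> is_sink n out (run_result (alg n) out)) \<and>
     (\<exists>c N. \<forall>n\<ge>N. \<forall>out. matousek_uso n out \<and> realizable n out \<longrightarrow>
        real (run_queries (alg n) out) \<le> c * (ln (real n))\<^sup>2)"
proof (intro exI[of _ alg] conjI)
  show "\<forall>n out. matousek_uso n out \<and> realizable n out \<longrightarrow> is_sink n out (run_result (alg n) out)"
  proof (intro allI impI)
    fix n out assume h: "matousek_uso n out \<and> realizable n out"
    then obtain R s where c: "cuso n R s out" using uso_structure by blast
    interpret cu: cuso n R s out by (rule c)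
    have r: "run_result (alg n) out = s" using cu.alg_run by simp
    have "out s = cu.G (vxor s s)" using cu.out_eq cu.s_sub by simp
    also have "vxor s s = {}" by (auto simp: vxor_def)
    also have "cu.G {} = {}" by (auto simp: cu.G_def)
    finally show "is_sink n out (run_result (alg n) out)" unfolding is_sink_def r using cu.s_sub by simp
  qed
  show "\<exists>c N. \<forall>n\<ge>N. \<forall>out. matousek_uso n out \<and> realizable n out \<longrightarrow>
        real (run_queries (alg n) out) \<le> c * (ln (real n))\<^sup>2"
  proof (intro exI[of _ "16 / (ln 2)^2"] exI[of _ "2::nat"] allI impI)
    fix n out assume n: "2 \<le> n" and h: "matousek_uso n out \<and> realizable n out"
    then obtain R s where c: "cuso n R s out" using uso_structure by blast
    have "run_queries (alg n) out = 1 + Lf n + Lf n * (2 * Lf n)" using cuso.alg_run[OF c] by simp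
    then show "real (run_queries (alg n) out) \<le> 16 / (ln 2)^2 * (ln (real n))\<^sup>2" using bound[OF n] by simp
  qed
qed

end
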